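(* Let $S$ and $T$ be ordered trees and let $e\colon S\to T$ be an embedding. Then there exists a rigid surjection $f\colon T\to S$ such that $e$ is the injection of $f$.
   Context: A tree is a finite, non-empty partially ordered set $(T,\sqsubseteq_T)$ with a smallest element (the root) such that the set of predecessors of each element is linearly ordered; each node counts as its own predecessor and successor. For $v,w\in T$, $v\wedge_T w$ is the $\sqsubseteq_T$-largest common predecessor of $v$ and $w$. A tree is ordered if the set of immediate successors of each node carries a fixed linear order; this induces the lexicographic linear order $\leq_T$ on $T$: $v\leq_T w$ if $v\sqsubseteq_T w$, and for $\sqsubseteq_T$-incomparable $v,w$, $v\leq_T w$ iff the immediate successor of $v\wedge_T w$ below $v$ precedes the one below $w$. A morphism $e\colon S\to T$ of ordered trees satisfies $e(v\wedge_S w)=e(v)\wedge_T e(w)$, is monotone from $\leq_S$ to $\leq_T$, and maps root to root; an embedding is an injective morphism. A function $f\colon T\to S$ is a rigid surjection if there is a morphism $e\colon S\to T$ with $f\circ e={\rm id}_S$ and $e(f(w))\sqsubseteq_T w$ for all $w\in T$; such $e$ is unique and is called the injection of $f$. *)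

theory Defs
  imports Main
begin

definition is_tree :: "'a set \<Rightarrow> ('a \<Rightarrow> 'a \<Rightarrow> bool) \<Rightarrow> bool" where
  "is_tree T le \<longleftrightarrow>
     finite T \<and> T \<noteq> {} \<and>
     (\<forall>x\<in>T. le x x) \<and>
     (\<forall>x\<in>T. \<forall>y\<in>T. le x y \<and> le y x \<longrightarrow> x = y) \<and>
     (\<forall>x\<in>T. \<forall>y\<in>T. \<forall>z\<in>T. le x y \<and> le y z \<longrightarrow> le x z) \<and>
     (\<exists>r\<in>T. \<forall>x\<in>T. le r x) \<and>
     (\<forall>x\<in>T. \<forall>y\<in>T. \<forall>z\<in>T. le y x \<and> le z x \<longrightarrow> le y z \<or> le z y)"

definition tree_root :: "'a set \<Rightarrow> ('a \<Rightarrow> 'a \<Rightarrow> bool) \<Rightarrow> 'a" where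
  "tree_root T le = (THE r. r \<in> T \<and> (\<forall>x\<in>T. le r x))"

definition imm_succ :: "'a set \<Rightarrow> ('a \<Rightarrow> 'a \<Rightarrow> bool) \<Rightarrow> 'a \<Rightarrow> 'a \<Rightarrow> bool" where
  "imm_succ T le v w \<longleftrightarrow>
     v \<in> T \<and> w \<in> T \<and> le v w \<and> v \<noteq> w \<and>
     \<not> (\<exists>u\<in>T. le v u \<and> le u w \<and> u \<noteq> v \<and> u \<noteq> w)"

definition is_ordered_tree ::
  "'a set \<Rightarrow> ('a \<Rightarrow> 'a \<Rightarrow> bool) \<Rightarrow> ('a \<Rightarrow> 'a \<Rightarrow> bool) \<Rightarrow> bool" where
  "is_ordered_tree T le sib \<longleftrightarrow>
     is_tree T le \<and>
     (\<forall>v\<in>T. let C = {c. imm_succ T le v c} in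
        (\<forall>x\<in>C. sib x x) \<and>
        (\<forall>x\<in>C. \<forall>y\<in>C. sib x y \<and> sib y x \<longrightarrow> x = y) \<and>
        (\<forall>x\<in>C. \<forall>y\<in>C. \<forall>z\<in>C. sib x y \<and> sib y z \<longrightarrow> sib x z) \<and>
        (\<forall>x\<in>C. \<forall>y\<in>C. sib x y \<or> sib y x))"

definition tree_meet :: "'a set \<Rightarrow> ('a \<Rightarrow> 'a \<Rightarrow> bool) \<Rightarrow> 'a \<Rightarrow> 'a \<Rightarrow> 'a" where
  "tree_meet T le v w =
     (THE z. z \<in> T \<and> le z v \<and> le z w \<and> (\<forall>u\<in>T. le u v \<and> le u w \<longrightarrow> le u z))"

definition succ_toward :: "'a set \<Rightarrow> ('a \<Rightarrow> 'a \<Rightarrow> bool) \<Rightarrow> 'a \<Rightarrow> 'a \<Rightarrow> 'a" where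
  "succ_toward T le m v = (THE c. imm_succ T le m c \<and> le c v)"

definition lex_le ::
  "'a set \<Rightarrow> ('a \<Rightarrow> 'a \<Rightarrow> bool) \<Rightarrow> ('a \<Rightarrow> 'a \<Rightarrow> bool) \<Rightarrow> 'a \<Rightarrow> 'a \<Rightarrow> bool" where
  "lex_le T le sib v w \<longleftrightarrow>
     le v w \<or>
     (\<not> le v w \<and> \<not> le w v \<and>
      sib (succ_toward T le (tree_meet T le v w) v)
          (succ_toward T le (tree_meet T le v w) w))"

definition tree_morphism ::
  "'a set \<Rightarrow> ('a \<Rightarrow> 'a \<Rightarrow> bool) \<Rightarrow> ('a \<Rightarrow> 'a \<Rightarrow> bool) \<Rightarrow>
   'b set \<Rightarrow> ('b \<Rightarrow> 'b \<Rightarrow> bool) \<Rightarrow> ('b \<Rightarrow> 'b \<Rightarrow> bool) \<Rightarrow> ('a \<Rightarrow> 'b) \<Rightarrow> bool" where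
  "tree_morphism S leS sibS T leT sibT e \<longleftrightarrow>
     e ` S \<subseteq> T \<and>
     (\<forall>v\<in>S. \<forall>w\<in>S. e (tree_meet S leS v w) = tree_meet T leT (e v) (e w)) \<and>
     (\<forall>v\<in>S. \<forall>w\<in>S. lex_le S leS sibS v w \<longrightarrow> lex_le T leT sibT (e v) (e w)) \<and>
     e (tree_root S leS) = tree_root T leT"

definition tree_embedding ::
  "'a set \<Rightarrow> ('a \<Rightarrow> 'a \<Rightarrow> bool) \<Rightarrow> ('a \<Rightarrow> 'a \<Rightarrow> bool) \<Rightarrow>
   'b set \<Rightarrow> ('b \<Rightarrow> 'b \<Rightarrow> bool) \<Rightarrow> ('b \<Rightarrow> 'b \<Rightarrow> bool) \<Rightarrow> ('a \<Rightarrow> 'b) \<Rightarrow> bool" where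
  "tree_embedding S leS sibS T leT sibT e \<longleftrightarrow>
     tree_morphism S leS sibS T leT sibT e \<and> inj_on e S"

text \<open>e witnesses that f : T \<rightarrow> S is a rigid surjection (e is "the injection of f";
  such e is unique by the paper).\<close>
definition is_injection_of ::
  "'b set \<Rightarrow> ('b \<Rightarrow> 'b \<Rightarrow> bool) \<Rightarrow> ('b \<Rightarrow> 'b \<Rightarrow> bool) \<Rightarrow>
   'a set \<Rightarrow> ('a \<Rightarrow> 'a \<Rightarrow> bool) \<Rightarrow> ('a \<Rightarrow> 'a \<Rightarrow> bool) \<Rightarrow>
   ('b \<Rightarrow> 'a) \<Rightarrow> ('a \<Rightarrow> 'b) \<Rightarrow> bool" where
  "is_injection_of T leT sibT S leS sibS f e \<longleftrightarrow>
     f ` T \<subseteq> S \<and>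
     tree_morphism S leS sibS T leT sibT e \<and>
     (\<forall>s\<in>S. f (e s) = s) \<and>
     (\<forall>w\<in>T. leT (e (f w)) w)"

definition rigid_surjection ::
  "'b set \<Rightarrow> ('b \<Rightarrow> 'b \<Rightarrow> bool) \<Rightarrow> ('b \<Rightarrow> 'b \<Rightarrow> bool) \<Rightarrow>
   'a set \<Rightarrow> ('a \<Rightarrow> 'a \<Rightarrow> bool) \<Rightarrow> ('a \<Rightarrow> 'a \<Rightarrow> bool) \<Rightarrow> ('b \<Rightarrow> 'a) \<Rightarrow> bool" where
  "rigid_surjection T leT sibT S leS sibS f \<longleftrightarrow>
     (\<exists>e. is_injection_of T leT sibT S leS sibS f e)"

end

theory Submission
  imports Defs
begin

lemma chain_max:
  assumes "finite A" "A \<noteq> {}"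
    and tr: "\<And>x y z. x \<in> A \<Longrightarrow> y \<in> A \<Longrightarrow> z \<in> A \<Longrightarrow> le x y \<Longrightarrow> le y z \<Longrightarrow> le x z"
    and ch: "\<And>x y. x \<in> A \<Longrightarrow> y \<in> A \<Longrightarrow> le x y \<or> le y x"
  shows "\<exists>m\<in>A. \<forall>a\<in>A. le a m"
  using assms
proof (induction A rule: finite_ne_induct)
  case (singleton x)
  have "le x x" using singleton.prems(2)[of x x] by simp
  then show ?case by simp
next
  case (insert x F)
  have trF: "le a c" if "a \<in> F" "b \<in> F" "c \<in> F" "le a b" "le b c" for a b c
    by (rule insert.prems(1)[of a b c]) (simp_all add: that)
  have chF: "le a b \<or> le b a" if "a \<in> F" "b \<in> F" for a b
    by (rule insert.prems(2)[of a b]) (simp_all add: that)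
  have "\<exists>m\<in>F. \<forall>a\<in>F. le a m" by (rule insert.IH) (erule (4) trF, erule (1) chF)
  then obtain m where m: "m \<in> F" "\<forall>a\<in>F. le a m" by (elim bexE)
  show ?case
  proof (cases "le x m")
    case True
    then have "\<forall>a\<in>insert x F. le a m" using m by simp
    then show ?thesis using m(1) by blast
  next
    case False
    have "le x m \<or> le m x" using insert.prems(2)[of x m] m(1) by simp
    then have xm: "le m x" using False by simp
    have xx: "le x x" using insert.prems(2)[of x x] by simp
    have "\<forall>a\<in>F. le a x"
    proof
      fix a assume a: "a \<in> F"
      show "le a x" by (rule insert.prems(1)[of a m x]) (use a m xm in simp_all)
    qed
    then show ?thesis using xx by simp
  qed
qed

theorem lemma2p3:
  fixes S :: "'a set" and leS sibS :: "'a \<Rightarrow> 'a \<Rightarrow> bool"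
    and T :: "'b set" and leT sibT :: "'b \<Rightarrow> 'b \<Rightarrow> bool"
    and e :: "'a \<Rightarrow> 'b"
  assumes "is_ordered_tree S leS sibS"
    and "is_ordered_tree T leT sibT"
    and "tree_embedding S leS sibS T leT sibT e"
  shows "\<exists>f. rigid_surjection T leT sibT S leS sibS f \<and>
             is_injection_of T leT sibT S leS sibS f e"
proof -
  have tS: "is_tree S leS" and tT: "is_tree T leT"
    using assms(1,2) unfolding is_ordered_tree_def by auto
  have mor: "tree_morphism S leS sibS T leT sibT e" and inj: "inj_on e S"
    using assms(3) unfolding tree_embedding_def by auto
  have eS: "e ` S \<subseteq> T" and eroot: "e (tree_root S leS) = tree_root T leT"
    using mor unfolding tree_morphism_def by auto
  have root: "tree_root X le \<in> X \<and> (\<forall>x\<in>X. le (tree_root X le) x)" if "is_tree X le" for X :: "'c set" and le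
  proof -
    have "\<exists>r\<in>X. \<forall>x\<in>X. le r x" using that unfolding is_tree_def by blast
    then obtain r where r: "r \<in> X" "\<forall>x\<in>X. le r x" by blast
    have ant: "\<forall>x\<in>X. \<forall>y\<in>X. le x y \<and> le y x \<longrightarrow> x = y"
      using that unfolding is_tree_def by blast
    have uniq: "\<And>r'. r' \<in> X \<and> (\<forall>x\<in>X. le r' x) \<Longrightarrow> r' = r"
    proof -
      fix r' assume h: "r' \<in> X \<and> (\<forall>x\<in>X. le r' x)"
      then show "r' = r" using ant r by blast
    qed
    have "tree_root X le = r" unfolding tree_root_def
      by (rule the_equality, use r in blast, rule uniq)
    then show ?thesis using r by auto
  qed
  have rS: "tree_root S leS \<in> S" using root[OF tS] by auto
  have rT: "\<forall>x\<in>T. leT (tree_root T leT) x" using root[OF tT] by auto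
  have finS: "finite S" using tS unfolding is_tree_def by blast
  have antT: "\<And>x y. x\<in>T \<Longrightarrow> y\<in>T \<Longrightarrow> leT x y \<Longrightarrow> leT y x \<Longrightarrow> x = y"
    using tT unfolding is_tree_def by blast
  have trT: "\<And>x y z. x\<in>T \<Longrightarrow> y\<in>T \<Longrightarrow> z\<in>T \<Longrightarrow> leT x y \<Longrightarrow> leT y z \<Longrightarrow> leT x z"
    using tT unfolding is_tree_def by blast
  have chT: "\<And>x y z. x\<in>T \<Longrightarrow> y\<in>T \<Longrightarrow> z\<in>T \<Longrightarrow> leT y x \<Longrightarrow> leT z x \<Longrightarrow> leT y z \<or> leT z y"
    using tT unfolding is_tree_def by blast
  define P where "P w s \<longleftrightarrow> s \<in> S \<and> leT (e s) w \<and> (\<forall>s'\<in>S. leT (e s') w \<longrightarrow> leT (e s') (e s))" for w s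
  define f where "f w = (SOME s. P w s)" for w
  have ex: "\<exists>s. P w s" if w: "w \<in> T" for w
  proof -
    let ?A = "e ` {s\<in>S. leT (e s) w}"
    have A1: "finite ?A" using finS by auto
    have A2: "?A \<noteq> {}" using rS eroot rT w by force
    have A3: "?A \<subseteq> T" using eS by auto
    have A4: "\<And>x y. x \<in> ?A \<Longrightarrow> y \<in> ?A \<Longrightarrow> leT x y \<or> leT y x"
    proof -
      fix x y assume "x \<in> ?A" "y \<in> ?A"
      then obtain a b where ab: "a \<in> S" "leT (e a) w" "x = e a" "b \<in> S" "leT (e b) w" "y = e b" by blast
      then have "x \<in> T" "y \<in> T" using eS by auto
      then show "leT x y \<or> leT y x" using chT[of w x y] w ab by simp
    qed
    obtain m where m: "m \<in> ?A" "\<forall>a\<in>?A. leT a m"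
    proof -
      have "\<exists>m\<in>?A. \<forall>a\<in>?A. leT a m"
      proof (rule chain_max[OF A1 A2])
        fix x y z assume "x \<in> ?A" "y \<in> ?A" "z \<in> ?A" "leT x y" "leT y z"
        moreover have "x \<in> T" "y \<in> T" "z \<in> T" using A3 calculation(1-3) by (auto simp del: image_iff)
        ultimately show "leT x z" using trT by metis
      next
        fix x y assume "x \<in> ?A" "y \<in> ?A"
        then show "leT x y \<or> leT y x" by (rule A4)
      qed
      then show ?thesis using that by blast
    qed
    then obtain s where "s \<in> S" "leT (e s) w" "m = e s" by auto
    then have "P w s" using m unfolding P_def by auto
    then show ?thesis by blast
  qed
  have Pf: "P w (f w)" if "w \<in> T" for w
    unfolding f_def using ex[OF that] by (rule someI_ex)
  have fe: "f (e s) = s" if s: "s \<in> S" for s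
  proof -
    have esT: "e s \<in> T" using eS s by auto
    have "\<forall>x\<in>T. leT x x" using tT unfolding is_tree_def by blast
    then have refl: "leT (e s) (e s)" using esT by blast
    have p: "P (e s) (f (e s))" using Pf[OF esT] .
    then have "leT (e s) (e (f (e s)))" "leT (e (f (e s))) (e s)" "f (e s) \<in> S"
      using s refl unfolding P_def by auto
    then have "e (f (e s)) = e s" using antT eS s by blast
    then show ?thesis using inj s \<open>f (e s) \<in> S\<close> by (meson inj_on_eq_iff)
  qed
  have inj_of: "is_injection_of T leT sibT S leS sibS f e"
    unfolding is_injection_of_def
  proof (intro conjI ballI subsetI)
    fix x assume "x \<in> f ` T" then show "x \<in> S" using Pf unfolding P_def by auto
  next
    show "tree_morphism S leS sibS T leT sibT e" by (rule mor)
  next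
    fix s assume "s \<in> S" then show "f (e s) = s" by (rule fe)
  next
    fix w assume "w \<in> T" then show "leT (e (f w)) w" using Pf unfolding P_def by auto
  qed
  have "rigid_surjection T leT sibT S leS sibS f"
    unfolding rigid_surjection_def using inj_of by (rule exI[of _ e])
  then show ?thesis using inj_of by (intro exI[of _ f] conjI)
qed

end
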